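(* Let $Q\in\mathbb{R}^{n\times n}$ be symmetric positive definite with $Q_{i,i}=1$ for all $i$, whose support graph is a connected tree, and let $c,\lambda\in\mathbb{R}^n$ with $\lambda_i>0$ for all $i$. Then for every node $u\in\{1,\dots,n\}$ there exist functions $p_{u,s}:\mathbb{R}\to\mathbb{R}$, indexed by $s\in\{0,1\}^{n_u-1}$, each of which is a strongly convex quadratic function (i.e. $p_{u,s}(\alpha)=a\alpha^2+b\alpha+d$ with $a>0$), such that for all $\alpha\in\mathbb{R}$, $$f_u(\alpha)=\min_{s\in\{0,1\}^{n_u-1}} p_{u,s}(\alpha)+\lambda_u\mathbb{1}_{\alpha}.$$
   Context: The support graph $\mathrm{supp}(Q)$ of a symmetric $Q\in\mathbb{R}^{n\times n}$ is the undirected graph on $\{1,\dots,n\}$ with edge $\{i,j\}$ ($i\neq j$) iff $Q_{i,j}\neq 0$. The tree is rooted at node $n$ and nodes are labeled topologically: every non-root node $u$ has a unique neighbor $\mathrm{child}(u)$ on its path to the root, and $u<\mathrm{child}(u)$; $\mathrm{par}(u)=\{v:\mathrm{child}(v)=u\}$. $\mathrm{supp}_u(Q)$ is the subtree consisting of $u$ and all nodes whose path to the root passes through $u$; $n_u$ is its number of nodes (so $u$ is the largest label in it). $Q_{[u]}$, $c_{[u]}$, $\lambda_{[u]}$ are the restrictions of $Q,c,\lambda$ to the index set of $\mathrm{supp}_u(Q)$. $\mathbb{1}_\alpha$ equals $0$ if $\alpha=0$ and $1$ otherwise. The parametric cost at node $u$ is $$f_u(\alpha)=\min_{x\in\mathbb{R}^{n_u},\,z\in\{0,1\}^{n_u}}\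 \tfrac12 x^\top Q_{[u]}x+c_{[u]}^\top x+\lambda_{[u]}^\top z\ \ \text{s.t. } x_i(1-z_i)=0\ \forall i,\ \ x_u=\alpha,$$ where $x_u$ denotes the coordinate of $x$ corresponding to node $u$. *)

theory Defs
  imports Complex_Main
begin

(* Matrices/vectors are indexed by node labels {1..n}; Q :: nat => nat => real,
   c, lambda, x :: nat => real (values outside the relevant index set are irrelevant). *)

definition supp_adj :: "nat \<Rightarrow> (nat \<Rightarrow> nat \<Rightarrow> real) \<Rightarrow> nat \<Rightarrow> nat \<Rightarrow> bool" where
  "supp_adj n Q i j \<longleftrightarrow> i \<in> {1..n} \<and> j \<in> {1..n} \<and> i \<noteq> j \<and> Q i j \<noteq> 0"

definition supp_edges :: "nat \<Rightarrow> (nat \<Rightarrow> nat \<Rightarrow> real) \<Rightarrow> nat set set" where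
  "supp_edges n Q = {{i, j} | i j. supp_adj n Q i j}"

definition graph_connected :: "nat \<Rightarrow> (nat \<Rightarrow> nat \<Rightarrow> real) \<Rightarrow> bool" where
  "graph_connected n Q \<longleftrightarrow>
     (\<forall>i\<in>{1..n}. \<forall>j\<in>{1..n}. (i, j) \<in> {(a, b). supp_adj n Q a b}\<^sup>*)"

(* a finite graph is a tree iff it is connected and has (number of vertices - 1) edges *)
definition supp_is_tree :: "nat \<Rightarrow> (nat \<Rightarrow> nat \<Rightarrow> real) \<Rightarrow> bool" where
  "supp_is_tree n Q \<longleftrightarrow> graph_connected n Q \<and> card (supp_edges n Q) = n - 1"

definition is_path :: "nat \<Rightarrow> (nat \<Rightarrow> nat \<Rightarrow> real) \<Rightarrow> nat list \<Rightarrow> nat \<Rightarrow> nat \<Rightarrow> bool" where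
  "is_path n Q p u v \<longleftrightarrow> p \<noteq> [] \<and> hd p = u \<and> last p = v \<and> distinct p \<and>
     (\<forall>k. Suc k < length p \<longrightarrow> supp_adj n Q (p ! k) (p ! Suc k))"

(* the (unique, in a tree) path from u to the root n *)
definition root_path :: "nat \<Rightarrow> (nat \<Rightarrow> nat \<Rightarrow> real) \<Rightarrow> nat \<Rightarrow> nat list" where
  "root_path n Q u = (THE p. is_path n Q p u n)"

definition child :: "nat \<Rightarrow> (nat \<Rightarrow> nat \<Rightarrow> real) \<Rightarrow> nat \<Rightarrow> nat" where
  "child n Q u = root_path n Q u ! 1"

definition subtree :: "nat \<Rightarrow> (nat \<Rightarrow> nat \<Rightarrow> real) \<Rightarrow> nat \<Rightarrow> nat set" where
  "subtree n Q u = {v \<in> {1..n}. u \<in> set (root_path n Q v)}"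

definition ind :: "real \<Rightarrow> real" where
  "ind \<alpha> = (if \<alpha> = 0 then 0 else 1)"

(* parametric cost f_u(alpha); the minimum is written as an infimum *)
definition f_cost :: "nat \<Rightarrow> (nat \<Rightarrow> nat \<Rightarrow> real) \<Rightarrow> (nat \<Rightarrow> real) \<Rightarrow> (nat \<Rightarrow> real)
                        \<Rightarrow> nat \<Rightarrow> real \<Rightarrow> real" where
  "f_cost n Q c lam u \<alpha> =
     (let V = subtree n Q u in
      Inf {(1/2) * (\<Sum>i\<in>V. \<Sum>j\<in>V. x i * Q i j * x j) + (\<Sum>i\<in>V. c i * x i)
             + (\<Sum>i\<in>V. lam i * z i)
           | x z. (\<forall>i\<in>V. z i \<in> {0, 1} \<and> x i * (1 - z i) = 0) \<and> x u = \<alpha>})"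

definition strongly_convex_quadratic :: "(real \<Rightarrow> real) \<Rightarrow> bool" where
  "strongly_convex_quadratic p \<longleftrightarrow> (\<exists>a b d. a > 0 \<and> (\<forall>\<alpha>. p \<alpha> = a * \<alpha>\<^sup>2 + b * \<alpha> + d))"

end

theory Submission
  imports Defs
begin


definition dst :: "('a \<times> 'a) set \<Rightarrow> 'a \<Rightarrow> 'a \<Rightarrow> nat" where
  "dst R r v = (LEAST k. (v, r) \<in> R ^^ k)"

lemma dst_reach: "(v, r) \<in> R\<^sup>* \<Longrightarrow> (v, r) \<in> R ^^ (dst R r v)"
  unfolding dst_def by (metis LeastI rtrancl_power)

lemma dst_le: "(v, r) \<in> R ^^ k \<Longrightarrow> dst R r v \<le> k"
  unfolding dst_def by (rule Least_le)

lemma dst_step: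
  assumes "(v, r) \<in> R\<^sup>*" "v \<noteq> r"
  shows "\<exists>w. (v, w) \<in> R \<and> (w, r) \<in> R\<^sup>* \<and> Suc (dst R r w) = dst R r v"
proof -
  have h: "(v, r) \<in> R ^^ (dst R r v)" using dst_reach[OF assms(1)] .
  have "dst R r v \<noteq> 0" using h assms(2) by (metis relpow_0_E)
  then obtain m where m: "dst R r v = Suc m" by (cases "dst R r v") auto
  then obtain w where w: "(v, w) \<in> R" "(w, r) \<in> R ^^ m" using h relpow_Suc_D2 by metis
  have wr: "(w, r) \<in> R\<^sup>*" using w(2) rtrancl_power by blast
  have "dst R r w \<le> m" using dst_le[OF w(2)] .
  moreover have "dst R r v \<le> Suc (dst R r w)"
    by (rule dst_le, rule relpow_Suc_I2[OF w(1) dst_reach[OF wr]])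
  ultimately show ?thesis using w(1) wr m by auto
qed

lemma card_edges_lower:
  assumes fin: "finite V" and RV: "R \<subseteq> V \<times> V" and r: "r \<in> V"
    and conn: "\<forall>v\<in>V. (v, r) \<in> R\<^sup>*"
  shows "card V - 1 \<le> card {{a, b} | a b. (a, b) \<in> R}"
proof -
  define nx where "nx v = (SOME w. (v, w) \<in> R \<and> Suc (dst R r w) = dst R r v)" for v
  have nx: "(v, nx v) \<in> R \<and> Suc (dst R r (nx v)) = dst R r v" if "v \<in> V - {r}" for v
  proof -
    from dst_step[of v r R] that conn obtain w where "(v, w) \<in> R \<and> Suc (dst R r w) = dst R r v" by auto
    then show ?thesis unfolding nx_def by (rule someI)
  qed
  define E where "E = {{a, b} | a b. (a, b) \<in> R}"
  have finE: "finite E"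
  proof -
    have "E \<subseteq> (\<lambda>(a, b). {a, b}) ` (V \<times> V)" unfolding E_def using RV by auto
    then show ?thesis using fin finite_subset by blast
  qed
  have inj: "inj_on (\<lambda>v. {v, nx v}) (V - {r})"
  proof (rule inj_onI)
    fix v w assume v: "v \<in> V - {r}" and w: "w \<in> V - {r}" and eq: "{v, nx v} = {w, nx w}"
    show "v = w"
    proof (rule ccontr)
      assume "v \<noteq> w"
      then have "v = nx w" "w = nx v" using eq by (auto simp: doubleton_eq_iff)
      then show False using nx[OF v] nx[OF w] by auto
    qed
  qed
  have "(\<lambda>v. {v, nx v}) ` (V - {r}) \<subseteq> E" unfolding E_def using nx by blast
  then have "card (V - {r}) \<le> card E" using card_inj_on_le[OF inj _ finE] by blast
  then show ?thesis using r fin unfolding E_def by simp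
qed



definition pedges :: "'a list \<Rightarrow> 'a set set" where
  "pedges p = {{p ! i, p ! Suc i} | i. Suc i < length p}"

lemma pedges_Cons2: "pedges (x # y # p) = insert {x, y} (pedges (y # p))"
proof (rule set_eqI, rule iffI)
  fix e assume "e \<in> pedges (x # y # p)"
  then obtain i where i: "Suc i < length (x # y # p)" "e = {(x # y # p) ! i, (x # y # p) ! Suc i}"
    unfolding pedges_def by blast
  show "e \<in> insert {x, y} (pedges (y # p))"
  proof (cases i)
    case 0 then show ?thesis using i by simp
  next
    case (Suc k)
    then have "Suc k < length (y # p)" "e = {(y # p) ! k, (y # p) ! Suc k}" using i by auto
    then show ?thesis unfolding pedges_def by blast
  qed
next
  fix e assume "e \<in> insert {x, y} (pedges (y # p))"
  then show "e \<in> pedges (x # y # p)"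
  proof
    assume "e = {x, y}"
    then have "e = {(x # y # p) ! 0, (x # y # p) ! Suc 0}" "Suc 0 < length (x # y # p)" by auto
    then show ?thesis unfolding pedges_def by blast
  next
    assume "e \<in> pedges (y # p)"
    then obtain k where "Suc k < length (y # p)" "e = {(y # p) ! k, (y # p) ! Suc k}"
      unfolding pedges_def by blast
    then have "Suc (Suc k) < length (x # y # p)" "e = {(x # y # p) ! Suc k, (x # y # p) ! Suc (Suc k)}"
      by auto
    then show ?thesis unfolding pedges_def by blast
  qed
qed

lemma pedges_subset_set: "e \<in> pedges p \<Longrightarrow> e \<subseteq> set p"
  unfolding pedges_def by (auto simp: nth_mem)

lemma pedges_single: "pedges [x] = {}" by (simp add: pedges_def)

lemma distinct_hd_last:
  assumes "distinct q" "q \<noteq> []" "hd q = last q" shows "q = [hd q]"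
proof (cases q)
  case Nil then show ?thesis using assms by simp
next
  case (Cons a q')
  show ?thesis
  proof (cases q')
    case Nil then show ?thesis using Cons by simp
  next
    case (Cons b q'')
    then have "last q \<in> set q'" using \<open>q = a # q'\<close> by simp
    then show ?thesis using assms \<open>q = a # q'\<close> by auto
  qed
qed

lemma pedges_sub_eq:
  "distinct p \<Longrightarrow> distinct q \<Longrightarrow> p \<noteq> [] \<Longrightarrow> q \<noteq> [] \<Longrightarrow> hd p = hd q \<Longrightarrow> last p = last q
   \<Longrightarrow> pedges p \<subseteq> pedges q \<Longrightarrow> p = q"
proof (induction p arbitrary: q)
  case Nil then show ?case by simp
next
  case (Cons x p')
  show ?case
  proof (cases p')
    case Nil
    then have "hd q = last q" using Cons.prems by simp
    then have "q = [hd q]" using distinct_hd_last Cons.prems by blast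
    then show ?thesis using Nil Cons.prems by (metis list.sel(1))
  next
    case (Cons y p'')
    have pe: "pedges (x # y # p'') = insert {x, y} (pedges (y # p''))" by (rule pedges_Cons2)
    have "{x, y} \<in> pedges q" using Cons.prems(7) pe \<open>p' = y # p''\<close> by auto
    then obtain i where i: "Suc i < length q" "{x, y} = {q ! i, q ! Suc i}" unfolding pedges_def by auto
    have xq0: "q ! 0 = x" using Cons.prems(3,4,5) by (simp add: hd_conv_nth)
    have xy: "x \<noteq> y" using Cons.prems(1) \<open>p' = y # p''\<close> by auto
    have "x = q ! i \<or> x = q ! Suc i" using i(2) by (auto simp: doubleton_eq_iff)
    moreover have "x \<noteq> q ! Suc i"
    proof
      assume "x = q ! Suc i"
      then have "q ! 0 = q ! Suc i" using xq0 by simp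
      then have "0 = Suc i" using nth_eq_iff_index_eq[of q 0 "Suc i"] Cons.prems(2) i(1) by linarith
      then show False by simp
    qed
    ultimately have "x = q ! i" by simp
    then have i0: "i = 0" using xq0 Cons.prems(2) i(1) nth_eq_iff_index_eq[of q 0 i] by (metis Suc_lessD zero_less_Suc less_trans)
    then have yq1: "q ! 1 = y" using i(2) xy xq0 by (auto simp: doubleton_eq_iff)
    obtain q'' where q: "q = x # y # q''"
    proof -
      obtain a r where "q = a # r" using Cons.prems(4) by (cases q) auto
      moreover obtain b r' where "r = b # r'" using i(1) i0 \<open>q = a # r\<close> by (cases r) auto
      ultimately show ?thesis using that xq0 yq1 by auto
    qed
    have "pedges (y # p'') \<subseteq> pedges (y # q'')"
    proof
      fix e assume e: "e \<in> pedges (y # p'')"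
      then have "x \<notin> e" using Cons.prems(1) \<open>p' = y # p''\<close> pedges_subset_set[OF e]
        by auto
      moreover have "e \<in> pedges q" using e Cons.prems(7) pe \<open>p' = y # p''\<close> by auto
      ultimately show "e \<in> pedges (y # q'')" using q pedges_Cons2[of x y q''] by auto
    qed
    then have "y # p'' = y # q''" using Cons.IH[of "y # q''"] Cons.prems q \<open>p' = y # p''\<close> by auto
    then show ?thesis using q \<open>p' = y # p''\<close> by simp
  qed
qed

lemma walk_rtrancl:
  assumes "\<forall>i. Suc i < length p \<longrightarrow> (p ! i, p ! Suc i) \<in> S"
  shows "i \<le> j \<Longrightarrow> j < length p \<Longrightarrow> (p ! i, p ! j) \<in> S\<^sup>*"
proof (induction j)
  case 0 then show ?case by simp
next
  case (Suc j)
  show ?case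
  proof (cases "i = Suc j")
    case True then show ?thesis by simp
  next
    case False
    then have "(p ! i, p ! j) \<in> S\<^sup>*" using Suc by auto
    moreover have "(p ! j, p ! Suc j) \<in> S" using assms Suc.prems by auto
    ultimately show ?thesis by (rule rtrancl_into_rtrancl)
  qed
qed



lemma sym_rt: "sym S \<Longrightarrow> (x, y) \<in> S\<^sup>* \<Longrightarrow> (y, x) \<in> S\<^sup>*"
  using sym_rtrancl symD by metis

lemma path_exists:
  fixes Q :: "nat \<Rightarrow> nat \<Rightarrow> real" and n :: nat
  defines "R \<equiv> {(a, b). supp_adj n Q a b}"
  shows "dst R n v = k \<Longrightarrow> (v, n) \<in> R\<^sup>* \<Longrightarrow>
     \<exists>p. is_path n Q p v n \<and> (\<forall>x\<in>set p. dst R n x \<le> k)"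
proof (induction k arbitrary: v)
  case 0
  then have "(v, n) \<in> R ^^ 0" using dst_reach by metis
  then have "v = n" by simp
  then show ?case using 0 unfolding is_path_def by (intro exI[of _ "[n]"]) auto
next
  case (Suc m)
  have "v \<noteq> n"
  proof
    assume "v = n" then have "(v, n) \<in> R ^^ 0" by simp
    then show False using dst_le[where v=v and r=n and R=R and k=0] Suc.prems by simp
  qed
  then obtain w where w: "(v, w) \<in> R" "(w, n) \<in> R\<^sup>*" "Suc (dst R n w) = dst R n v"
    using dst_step Suc.prems(2) by metis
  then obtain p' where p': "is_path n Q p' w n" "\<forall>x\<in>set p'. dst R n x \<le> m"
    using Suc.IH[of w] Suc.prems by auto
  have vn: "v \<notin> set p'" using p'(2) w(3) Suc.prems(1) by fastforce
  have "is_path n Q (v # p') v n"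
    unfolding is_path_def
  proof (intro conjI allI impI)
    show "last (v # p') = n" using p'(1) unfolding is_path_def by simp
    show "distinct (v # p')" using p'(1) vn unfolding is_path_def by simp
    fix k assume k: "Suc k < length (v # p')"
    show "supp_adj n Q ((v # p') ! k) ((v # p') ! Suc k)"
    proof (cases k)
      case 0
      then show ?thesis using w(1) p'(1) unfolding is_path_def R_def by (auto simp: hd_conv_nth[symmetric])
    next
      case (Suc j)
      then show ?thesis using k p'(1) unfolding is_path_def by auto
    qed
  qed auto
  then show ?case using p'(2) Suc.prems(1) by (intro exI[of _ "v # p'"]) auto
qed

lemma path_unique:
  fixes Q :: "nat \<Rightarrow> nat \<Rightarrow> real"
  assumes sym: "\<forall>i\<in>{1..n}. \<forall>j\<in>{1..n}. Q i j = Q j i"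
    and tree: "supp_is_tree n Q"
    and p: "is_path n Q p v n" and q: "is_path n Q q v n"
  shows "p = q"
proof (rule ccontr)
  assume pq: "p \<noteq> q"
  define R where "R = {(a, b). supp_adj n Q a b}"
  have Rsym: "(x, y) \<in> R \<Longrightarrow> (y, x) \<in> R" for x y
    using sym unfolding R_def supp_adj_def by auto
  have "\<not> pedges p \<subseteq> pedges q"
    using pedges_sub_eq[of p q] p q pq unfolding is_path_def by auto
  then obtain e where e: "e \<in> pedges p" "e \<notin> pedges q" by blast
  then obtain k where k: "Suc k < length p" "e = {p ! k, p ! Suc k}" unfolding pedges_def by blast
  define a where "a = p ! k"
  define b where "b = p ! Suc k"
  have ab: "(a, b) \<in> R" using p k(1) unfolding is_path_def R_def a_def b_def by auto
  define R' where "R' = R - {(a, b), (b, a)}"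
  have R'sym: "sym R'" unfolding R'_def sym_def using Rsym by auto
  have distp: "distinct p" and distq: "distinct q" using p q unfolding is_path_def by auto
  have pR': "(p ! i, p ! Suc i) \<in> R'" if "Suc i < length p" "i \<noteq> k" for i
  proof -
    have "(p ! i, p ! Suc i) \<in> R" using p that(1) unfolding is_path_def R_def by auto
    moreover have "(p ! i, p ! Suc i) \<noteq> (a, b)"
    proof
      assume "(p ! i, p ! Suc i) = (a, b)"
      then have "p ! i = p ! k" unfolding a_def by simp
      then have "i = k" using nth_eq_iff_index_eq[OF distp, of i k] that k by simp
      then show False using that by simp
    qed
    moreover have "(p ! i, p ! Suc i) \<noteq> (b, a)"
    proof
      assume "(p ! i, p ! Suc i) = (b, a)"
      then have "p ! i = p ! Suc k" "p ! Suc i = p ! k" unfolding a_def b_def by auto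
      then have "i = Suc k" "Suc i = k" using nth_eq_iff_index_eq[OF distp, of i "Suc k"]
          nth_eq_iff_index_eq[OF distp, of "Suc i" k] that k by simp_all
      then show False by simp
    qed
    ultimately show ?thesis unfolding R'_def by auto
  qed
  have qR': "(q ! i, q ! Suc i) \<in> R'" if "Suc i < length q" for i
  proof -
    have "(q ! i, q ! Suc i) \<in> R" using q that unfolding is_path_def R_def by auto
    moreover have "{q ! i, q ! Suc i} \<in> pedges q" using that unfolding pedges_def by blast
    then have "{q ! i, q ! Suc i} \<noteq> {a, b}" using e k unfolding a_def b_def by auto
    then have "(q ! i, q ! Suc i) \<notin> {(a, b), (b, a)}" by auto
    ultimately show ?thesis unfolding R'_def by auto
  qed
  have "(take (Suc k) p ! 0, take (Suc k) p ! k) \<in> R'\<^sup>*"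
    apply (rule walk_rtrancl)
    using pR' k by auto
  then have "(v, a) \<in> R'\<^sup>*" using p k unfolding is_path_def a_def by (auto simp: hd_conv_nth[symmetric])
  then have av: "(a, v) \<in> R'\<^sup>*" using sym_rt[OF R'sym] by blast
  have "(q ! 0, q ! (length q - 1)) \<in> R'\<^sup>*"
    apply (rule walk_rtrancl) using qR' q unfolding is_path_def by auto
  then have vn: "(v, n) \<in> R'\<^sup>*" using q unfolding is_path_def by (metis hd_conv_nth last_conv_nth)
  have "(drop (Suc k) p ! 0, drop (Suc k) p ! (length (drop (Suc k) p) - 1)) \<in> R'\<^sup>*"
    apply (rule walk_rtrancl) using pR' k by auto
  moreover have "drop (Suc k) p ! 0 = b" using k unfolding b_def by simp
  moreover have "drop (Suc k) p ! (length (drop (Suc k) p) - 1) = p ! (length p - 1)"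
  proof -
    have "Suc (length p - 2) = length p - 1" using k by arith
    then show ?thesis using k by simp
  qed
  moreover have "p ! (length p - 1) = n" using p unfolding is_path_def by (metis last_conv_nth)
  ultimately have "(b, n) \<in> R'\<^sup>*" by simp
  then have nb: "(n, b) \<in> R'\<^sup>*" using sym_rt[OF R'sym] by blast
  have abR': "(a, b) \<in> R'\<^sup>*" using av vn nb by (meson rtrancl_trans)
  then have baR': "(b, a) \<in> R'\<^sup>*" using sym_rt[OF R'sym] by blast
  have RR': "(x, y) \<in> R\<^sup>* \<Longrightarrow> (x, y) \<in> R'\<^sup>*" for x y
  proof (induction rule: rtrancl_induct)
    case base then show ?case by simp
  next
    case (step y z)
    show ?case
    proof (cases "(y, z) \<in> {(a, b), (b, a)}")
      case True then show ?thesis using step abR' baR' by (auto intro: rtrancl_trans)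
    next
      case False then have "(y, z) \<in> R'" using step unfolding R'_def by auto
      then show ?thesis using step by auto
    qed
  qed
  have conn: "\<forall>x\<in>{1..n}. (x, n) \<in> R\<^sup>*" and cardE: "card (supp_edges n Q) = n - 1"
    using tree unfolding supp_is_tree_def graph_connected_def R_def by auto
  have n1: "n \<in> {1..n}" using ab unfolding R_def supp_adj_def by auto
  have low: "card {1..n} - 1 \<le> card {{x, y} | x y. (x, y) \<in> R'}"
    apply (rule card_edges_lower[of "{1..n}" R' n])
    using RR' conn n1 unfolding R'_def R_def supp_adj_def by auto
  have sub: "{{x, y} | x y. (x, y) \<in> R'} \<subseteq> supp_edges n Q - {{a, b}}"
  proof
    fix f assume "f \<in> {{x, y} | x y. (x, y) \<in> R'}"
    then obtain x y where f: "f = {x, y}" "(x, y) \<in> R'" by blast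
    have "f \<in> supp_edges n Q" using f unfolding R'_def R_def supp_edges_def by blast
    moreover have "f \<noteq> {a, b}"
    proof
      assume "f = {a, b}"
      then have "(x, y) = (a, b) \<or> (x, y) = (b, a)" using f(1) by (auto simp: doubleton_eq_iff)
      then show False using f(2) unfolding R'_def by blast
    qed
    ultimately show "f \<in> supp_edges n Q - {{a, b}}" by blast
  qed
  have finE: "finite (supp_edges n Q)"
  proof -
    have "supp_edges n Q \<subseteq> (\<lambda>(a, b). {a, b}) ` ({1..n} \<times> {1..n})"
      unfolding supp_edges_def supp_adj_def by fast
    then show ?thesis using finite_subset by blast
  qed
  have abE: "{a, b} \<in> supp_edges n Q" using ab unfolding R_def supp_edges_def by auto
  have "card {{x, y} | x y. (x, y) \<in> R'} \<le> card (supp_edges n Q - {{a, b}})"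
    using card_mono[OF _ sub] finE by blast
  then have "n - 1 \<le> card (supp_edges n Q - {{a, b}})" using low by simp
  moreover have "card (supp_edges n Q - {{a, b}}) = card (supp_edges n Q) - 1"
    using card_Diff_singleton[OF abE] .
  moreover have "card (supp_edges n Q) \<noteq> 0" using finE abE card_0_eq by blast
  then have "card (supp_edges n Q) \<ge> 1" by linarith
  ultimately have "n - 1 \<le> card (supp_edges n Q) - 1" "card (supp_edges n Q) \<ge> 1" by linarith+
  then show False using cardE by linarith
qed



definition QF :: "(nat \<Rightarrow> nat \<Rightarrow> real) \<Rightarrow> nat set \<Rightarrow> (nat \<Rightarrow> real) \<Rightarrow> real" where
  "QF A T x = (\<Sum>i\<in>T. \<Sum>j\<in>T. x i * A i j * x j)"

definition LF :: "(nat \<Rightarrow> real) \<Rightarrow> nat set \<Rightarrow> (nat \<Rightarrow> real) \<Rightarrow> real" where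
  "LF b T x = (\<Sum>i\<in>T. b i * x i)"

lemma QF_cong: "(\<And>i. i \<in> T \<Longrightarrow> x i = y i) \<Longrightarrow> QF A T x = QF A T y"
  unfolding QF_def by (intro sum.cong refl) auto

lemma LF_cong: "(\<And>i. i \<in> T \<Longrightarrow> x i = y i) \<Longrightarrow> LF b T x = LF b T y"
  unfolding LF_def by (intro sum.cong refl) auto

lemma QF_insert:
  assumes fin: "finite T0" and j: "j \<notin> T0"
    and sym: "\<forall>i\<in>insert j T0. \<forall>k\<in>insert j T0. A i k = A k i"
  shows "QF A (insert j T0) x = A j j * (x j)\<^sup>2 + 2 * x j * (\<Sum>k\<in>T0. A j k * x k) + QF A T0 x"
proof -
  have "QF A (insert j T0) x = (\<Sum>k\<in>insert j T0. x j * A j k * x k) + (\<Sum>i\<in>T0. \<Sum>k\<in>insert j T0. x i * A i k * x k)"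
    unfolding QF_def using fin j by (simp add: sum.insert)
  also have "(\<Sum>k\<in>insert j T0. x j * A j k * x k) = x j * A j j * x j + (\<Sum>k\<in>T0. x j * A j k * x k)"
    using fin j by simp
  also have "(\<Sum>i\<in>T0. \<Sum>k\<in>insert j T0. x i * A i k * x k) = (\<Sum>i\<in>T0. x i * A i j * x j + (\<Sum>k\<in>T0. x i * A i k * x k))"
    using fin j by (intro sum.cong refl) simp
  also have "\<dots> = (\<Sum>i\<in>T0. x i * A i j * x j) + QF A T0 x"
    unfolding QF_def by (simp add: sum.distrib)
  also have "(\<Sum>i\<in>T0. x i * A i j * x j) = (\<Sum>k\<in>T0. x j * A j k * x k)"
  proof (intro sum.cong refl)
    fix i assume "i \<in> T0"
    then have "A i j = A j i" using sym by blast
    then show "x i * A i j * x j = x j * A j i * x i" by simp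
  qed
  also have "(\<Sum>k\<in>T0. x j * A j k * x k) = x j * (\<Sum>k\<in>T0. A j k * x k)"
    by (simp add: sum_distrib_left mult.assoc)
  finally show ?thesis by (simp add: power2_eq_square algebra_simps)
qed

lemma LF_insert: "finite T0 \<Longrightarrow> j \<notin> T0 \<Longrightarrow> LF b (insert j T0) x = b j * x j + LF b T0 x"
  unfolding LF_def by simp

lemma QF_schur:
  "QF (\<lambda>i k. A i k - A j i * A j k / A j j) T0 x = QF A T0 x - (\<Sum>k\<in>T0. A j k * x k)\<^sup>2 / A j j"
proof -
  have "QF (\<lambda>i k. A i k - A j i * A j k / A j j) T0 x =
        QF A T0 x - (\<Sum>i\<in>T0. \<Sum>k\<in>T0. (A j i * x i) * (A j k * x k)) / A j j"
    unfolding QF_def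
    by (simp add: algebra_simps sum_subtractf sum_divide_distrib)
  also have "(\<Sum>i\<in>T0. \<Sum>k\<in>T0. (A j i * x i) * (A j k * x k)) = (\<Sum>k\<in>T0. A j k * x k)\<^sup>2"
    by (simp add: power2_eq_square sum_product)
  finally show ?thesis .
qed

lemma LF_schur:
  "LF (\<lambda>i. b i - b j * A j i / A j j) T0 x = LF b T0 x - b j * (\<Sum>k\<in>T0. A j k * x k) / A j j"
  unfolding LF_def by (simp add: algebra_simps sum_subtractf sum_divide_distrib sum_distrib_left)



definition symon :: "(nat \<Rightarrow> nat \<Rightarrow> real) \<Rightarrow> nat set \<Rightarrow> bool" where
  "symon A T \<longleftrightarrow> (\<forall>i\<in>T. \<forall>k\<in>T. A i k = A k i)"

definition pdon :: "(nat \<Rightarrow> nat \<Rightarrow> real) \<Rightarrow> nat set \<Rightarrow> bool" where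
  "pdon A T \<longleftrightarrow> (\<forall>x. (\<exists>i\<in>T. x i \<noteq> 0) \<longrightarrow> QF A T x > 0)"

lemma quad_min:
  assumes "finite S" "u \<notin> S"
  shows "\<And>A b d. symon A (insert u S) \<Longrightarrow> pdon A (insert u S) \<Longrightarrow>
    \<exists>a \<beta> \<delta>. a > 0 \<and>
      (\<forall>x. QF A (insert u S) x / 2 + LF b (insert u S) x + d \<ge> a * (x u)\<^sup>2 + \<beta> * x u + \<delta>) \<and>
      (\<forall>\<alpha>. \<exists>x. x u = \<alpha> \<and> QF A (insert u S) x / 2 + LF b (insert u S) x + d = a * \<alpha>\<^sup>2 + \<beta> * \<alpha> + \<delta>)"
  using assms
proof (induction S rule: finite_induct)
  case empty
  have q: "QF A {u} x = A u u * (x u)\<^sup>2" for x unfolding QF_def by (simp add: power2_eq_square)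
  have l: "LF b {u} x = b u * x u" for x unfolding LF_def by simp
  have "QF A {u} (\<lambda>_. 1) > 0" using empty.prems(2) unfolding pdon_def by auto
  then have "A u u > 0" using q[of "\<lambda>_. 1"] by simp
  show ?case
  proof (rule exI[of _ "A u u / 2"], rule exI[of _ "b u"], rule exI[of _ d], intro conjI allI)
    show "A u u / 2 > 0" using \<open>A u u > 0\<close> by simp
  next
    fix x :: "nat \<Rightarrow> real"
    show "QF A {u} x / 2 + LF b {u} x + d \<ge> A u u / 2 * (x u)\<^sup>2 + b u * x u + d"
      unfolding q l by simp
  next
    fix \<alpha> :: real
    show "\<exists>x. x u = \<alpha> \<and> QF A {u} x / 2 + LF b {u} x + d = A u u / 2 * \<alpha>\<^sup>2 + b u * \<alpha> + d"
      by (rule exI[of _ "\<lambda>_. \<alpha>"]) (simp add: q l)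
  qed
next
  case (insert j S)
  have uj: "u \<noteq> j" and uS: "u \<notin> S" using insert.prems by auto
  define T0 where "T0 = insert u S"
  have T: "insert u (insert j S) = insert j T0" unfolding T0_def by auto
  have finT0: "finite T0" and jT0: "j \<notin> T0" using insert uj unfolding T0_def by auto
  have symA: "\<forall>i\<in>insert j T0. \<forall>k\<in>insert j T0. A i k = A k i"
    using insert.prems(1) unfolding T symon_def .
  have pdA: "pdon A (insert j T0)" using insert.prems(2) unfolding T .
  define L where "L x = (\<Sum>k\<in>T0. A j k * x k)" for x
  have dec: "QF A (insert j T0) x = A j j * (x j)\<^sup>2 + 2 * x j * L x + QF A T0 x" for x
    unfolding L_def by (rule QF_insert[OF finT0 jT0 symA])
  have Ajj: "A j j > 0"
  proof -
    define e where "e = (\<lambda>i::nat. if i = j then 1 else (0::real))"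
    have "L e = 0" unfolding L_def e_def using jT0 by (intro sum.neutral) auto
    moreover have "QF A T0 e = 0" unfolding QF_def e_def using jT0 by (intro sum.neutral) auto
    moreover have "QF A (insert j T0) e > 0" using pdA unfolding pdon_def e_def by auto
    ultimately show ?thesis using dec[of e] unfolding e_def by simp
  qed
  define A' where "A' i k = A i k - A j i * A j k / A j j" for i k
  define b' where "b' i = b i - b j * A j i / A j j" for i
  define d' where "d' = d - (b j)\<^sup>2 / (2 * A j j)"
  have schurQ: "QF A' T0 x = QF A T0 x - (L x)\<^sup>2 / A j j" for x
    unfolding A'_def L_def by (rule QF_schur)
  have schurL: "LF b' T0 x = LF b T0 x - b j * L x / A j j" for x
    unfolding b'_def L_def by (rule LF_schur)
  define F where "F x = QF A (insert j T0) x / 2 + LF b (insert j T0) x + d" for x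
  define F' where "F' x = QF A' T0 x / 2 + LF b' T0 x + d'" for x
  have ident: "F x = A j j / 2 * (x j + (L x + b j) / A j j)\<^sup>2 + F' x" for x
  proof -
    have h1: "F x = (A j j * (x j)\<^sup>2 + 2 * x j * L x + QF A T0 x) / 2 + (b j * x j + LF b T0 x) + d"
      unfolding F_def using dec LF_insert[OF finT0 jT0] by simp
    have h2: "F' x = (QF A T0 x - (L x)\<^sup>2 / A j j) / 2 + (LF b T0 x - b j * L x / A j j) + d - (b j)\<^sup>2 / (2 * A j j)"
      unfolding F'_def d'_def using schurQ schurL by simp
    have ne: "A j j \<noteq> 0" using Ajj by simp
    show ?thesis unfolding h1 h2 using ne
      by (simp add: field_simps power2_eq_square)
  qed
  have symA': "symon A' T0" unfolding symon_def
  proof (intro ballI)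
    fix i k assume "i \<in> T0" "k \<in> T0"
    then have "A i k = A k i" using symA by blast
    then show "A' i k = A' k i" unfolding A'_def by (simp add: mult.commute)
  qed
  have pdA': "pdon A' T0" unfolding pdon_def
  proof (intro allI impI)
    fix y :: "nat \<Rightarrow> real" assume y: "\<exists>i\<in>T0. y i \<noteq> 0"
    define x where "x = y(j := - L y / A j j)"
    have xy: "\<And>i. i \<in> T0 \<Longrightarrow> x i = y i" unfolding x_def using jT0 by auto
    have Lxy: "L x = L y" unfolding L_def using xy by (intro sum.cong refl) auto
    have "QF A (insert j T0) x > 0" using pdA y xy unfolding pdon_def by (metis insertCI)
    moreover have "QF A (insert j T0) x = QF A' T0 x"
    proof -
      have xj: "x j = - L x / A j j" using Lxy unfolding x_def by simp
      have "L x * L x + A j j * QF A (insert j T0) x = A j j * QF A T0 x \<and>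
            L x * L x + A j j * QF A' T0 x = A j j * QF A T0 x"
        using dec[of x] schurQ[of x] Ajj unfolding xj by (simp add: field_simps power2_eq_square)
      then have "A j j * QF A (insert j T0) x = A j j * QF A' T0 x" by linarith
      then show ?thesis using Ajj by simp
    qed
    moreover have "QF A' T0 x = QF A' T0 y" using xy by (rule QF_cong)
    ultimately show "QF A' T0 y > 0" by simp
  qed
  obtain a \<beta> \<delta> where ab: "a > 0"
    "\<forall>x. QF A' T0 x / 2 + LF b' T0 x + d' \<ge> a * (x u)\<^sup>2 + \<beta> * x u + \<delta>"
    "\<forall>\<alpha>. \<exists>x. x u = \<alpha> \<and> QF A' T0 x / 2 + LF b' T0 x + d' = a * \<alpha>\<^sup>2 + \<beta> * \<alpha> + \<delta>"
    using insert.IH[of A' b' d'] symA' pdA' uS unfolding T0_def by blast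
  show ?case unfolding T
  proof (rule exI[of _ a], rule exI[of _ \<beta>], rule exI[of _ \<delta>], intro conjI allI)
    show "a > 0" by (rule ab(1))
    fix x
    have "F x \<ge> F' x" using ident[of x] Ajj by simp
    then show "QF A (insert j T0) x / 2 + LF b (insert j T0) x + d \<ge> a * (x u)\<^sup>2 + \<beta> * x u + \<delta>"
      using ab(2) unfolding F_def F'_def by (meson order_trans)
  next
    fix \<alpha>
    obtain y where y: "y u = \<alpha>" "F' y = a * \<alpha>\<^sup>2 + \<beta> * \<alpha> + \<delta>" using ab(3) unfolding F'_def by blast
    define x where "x = y(j := - (L y + b j) / A j j)"
    have xy: "\<And>i. i \<in> T0 \<Longrightarrow> x i = y i" unfolding x_def using jT0 by auto
    have Lxy: "L x = L y" unfolding L_def using xy by (intro sum.cong refl) auto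
    have F'xy: "F' x = F' y" unfolding F'_def by (simp only: QF_cong[OF xy] LF_cong[OF xy])
    have "x j + (L x + b j) / A j j = 0" using Lxy unfolding x_def by (simp add: add_divide_distrib[symmetric])
    then have "F x = F' x" using ident[of x] by simp
    moreover have "x u = \<alpha>" using y uj unfolding x_def by simp
    ultimately show "\<exists>x. x u = \<alpha> \<and> QF A (insert j T0) x / 2 + LF b (insert j T0) x + d = a * \<alpha>\<^sup>2 + \<beta> * \<alpha> + \<delta>"
      using F'xy y unfolding F_def by metis
  qed
qed



lemma u_in_subtree:
  fixes Q :: "nat \<Rightarrow> nat \<Rightarrow> real"
  assumes sym: "\<forall>i\<in>{1..n}. \<forall>j\<in>{1..n}. Q i j = Q j i"
    and tree: "supp_is_tree n Q" and u: "u \<in> {1..n}"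
  shows "u \<in> subtree n Q u"
proof -
  define R where "R = {(a, b). supp_adj n Q a b}"
  have "(u, n) \<in> R\<^sup>*" using tree u unfolding supp_is_tree_def graph_connected_def R_def by auto
  then obtain p where p: "is_path n Q p u n"
    using path_exists[where Q=Q and n=n and v=u and k="dst R n u"] unfolding R_def by blast
  have "\<exists>!p. is_path n Q p u n" using p path_unique[OF sym tree] by blast
  then have "is_path n Q (root_path n Q u) u n" unfolding root_path_def by (rule theI')
  then have "u \<in> set (root_path n Q u)" unfolding is_path_def by (metis list.set_sel(1))
  then show ?thesis using u unfolding subtree_def by auto
qed

lemma QF_restrict:
  assumes "finite V" "T \<subseteq> V" "\<forall>i\<in>V - T. x i = 0"
  shows "QF A V x = QF A T x"
proof -
  have "QF A V x = (\<Sum>i\<in>V. \<Sum>j\<in>T. x i * A i j * x j)"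
    unfolding QF_def
    by (intro sum.cong refl sum.mono_neutral_right) (use assms in auto)
  also have "\<dots> = QF A T x"
    unfolding QF_def by (intro sum.mono_neutral_right) (use assms in auto)
  finally show ?thesis .
qed

lemma LF_restrict:
  assumes "finite V" "T \<subseteq> V" "\<forall>i\<in>V - T. x i = 0"
  shows "LF b V x = LF b T x"
  unfolding LF_def by (intro sum.mono_neutral_right) (use assms in auto)

lemma lam_sum:
  assumes "finite W" "S \<subseteq> W" "\<forall>i\<in>S. z i = 1" "\<forall>i\<in>W - S. z i = 0"
  shows "(\<Sum>i\<in>W. lam i * z i) = (\<Sum>i\<in>S. (lam i :: real))"
proof -
  have "(\<Sum>i\<in>W. lam i * z i) = (\<Sum>i\<in>S. lam i * z i)"
    by (intro sum.mono_neutral_right) (use assms in auto)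
  also have "\<dots> = (\<Sum>i\<in>S. lam i)" using assms by (intro sum.cong refl) auto
  finally show ?thesis .
qed



lemma lemma1_aux:
  fixes n :: nat and Q :: "nat \<Rightarrow> nat \<Rightarrow> real" and c lam :: "nat \<Rightarrow> real"
  assumes n_pos: "n \<ge> 1"
    and sym: "\<forall>i\<in>{1..n}. \<forall>j\<in>{1..n}. Q i j = Q j i"
    and posdef: "\<forall>x :: nat \<Rightarrow> real. (\<exists>i\<in>{1..n}. x i \<noteq> 0) \<longrightarrow>
                   (\<Sum>i\<in>{1..n}. \<Sum>j\<in>{1..n}. x i * Q i j * x j) > 0"
    and diag: "\<forall>i\<in>{1..n}. Q i i = 1"
    and tree: "supp_is_tree n Q"
    and topo: "\<forall>u\<in>{1..<n}. u < child n Q u"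
    and lam_pos: "\<forall>i\<in>{1..n}. lam i > 0"
    and u: "u \<in> {1..n}"
  shows "\<exists>p :: bool list \<Rightarrow> real \<Rightarrow> real.
           (\<forall>s. length s = card (subtree n Q u) - 1 \<longrightarrow> strongly_convex_quadratic (p s)) \<and>
           (\<forall>\<alpha>. f_cost n Q c lam u \<alpha> =
                 Min ((\<lambda>s. p s \<alpha>) ` {s. length s = card (subtree n Q u) - 1}) + lam u * ind \<alpha>)"
proof -
  define V where "V = subtree n Q u"
  define W where "W = V - {u}"
  have V1n: "V \<subseteq> {1..n}" unfolding V_def subtree_def by auto
  have finV: "finite V" using V1n finite_subset by blast
  have uV: "u \<in> V" unfolding V_def using u_in_subtree[OF sym tree u] .
  have finW: "finite W" unfolding W_def using finV by simp
  have cardW: "card W = card V - 1" unfolding W_def using finV uV by simp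
  have uW: "u \<notin> W" unfolding W_def by simp
  have VW: "V = insert u W" unfolding W_def using uV by auto
  have lamu: "lam u > 0" using lam_pos u by auto
  have symT: "symon Q T" if "T \<subseteq> {1..n}" for T
    unfolding symon_def using sym that by blast
  have pdT: "pdon Q T" if T: "T \<subseteq> {1..n}" for T
    unfolding pdon_def
  proof (intro allI impI)
    fix x :: "nat \<Rightarrow> real" assume x: "\<exists>i\<in>T. x i \<noteq> 0"
    define x' where "x' i = (if i \<in> T then x i else 0)" for i
    have "\<exists>i\<in>{1..n}. x' i \<noteq> 0" using x T unfolding x'_def by auto
    then have "QF Q {1..n} x' > 0" using posdef unfolding QF_def by blast
    moreover have "QF Q {1..n} x' = QF Q T x'" by (rule QF_restrict) (use T in \<open>auto simp: x'_def\<close>)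
    moreover have "QF Q T x' = QF Q T x" by (rule QF_cong) (simp add: x'_def)
    ultimately show "QF Q T x > 0" by simp
  qed
  define P where "P S t \<longleftrightarrow> fst t > 0 \<and>
      (\<forall>x. QF Q (insert u S) x / 2 + LF c (insert u S) x + 0 \<ge> fst t * (x u)\<^sup>2 + fst (snd t) * x u + snd (snd t)) \<and>
      (\<forall>\<alpha>. \<exists>x. x u = \<alpha> \<and> QF Q (insert u S) x / 2 + LF c (insert u S) x + 0 = fst t * \<alpha>\<^sup>2 + fst (snd t) * \<alpha> + snd (snd t))"
    for S and t :: "real \<times> real \<times> real"
  have exP: "\<exists>t. P S t" if S: "S \<subseteq> W" for S
  proof -
    have finS: "finite S" using S finW finite_subset by blast
    have uS: "u \<notin> S" using S uW by blast
    have sub: "insert u S \<subseteq> {1..n}" using S V1n uV unfolding W_def by auto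
    obtain a \<beta> \<delta> where "a > 0"
      "\<forall>x. QF Q (insert u S) x / 2 + LF c (insert u S) x + 0 \<ge> a * (x u)\<^sup>2 + \<beta> * x u + \<delta>"
      "\<forall>\<alpha>. \<exists>x. x u = \<alpha> \<and> QF Q (insert u S) x / 2 + LF c (insert u S) x + 0 = a * \<alpha>\<^sup>2 + \<beta> * \<alpha> + \<delta>"
      using quad_min[OF finS uS, of Q c 0] symT[OF sub] pdT[OF sub] by blast
    then have "P S (a, \<beta>, \<delta>)" unfolding P_def by simp
    then show ?thesis by blast
  qed
  define tt where "tt S = (SOME t. P S t)" for S
  have Ptt: "P S (tt S)" if "S \<subseteq> W" for S
    unfolding tt_def using exP[OF that] by (rule someI_ex)
  define ws where "ws = sorted_list_of_set W"
  have setws: "set ws = W" unfolding ws_def using finW by simp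
  have lenws: "length ws = card V - 1" unfolding ws_def using cardW by simp
  define setof where "setof s = {ws ! i | i. i < length ws \<and> s ! i}" for s :: "bool list"
  have setof_sub: "setof s \<subseteq> W" for s unfolding setof_def using setws nth_mem by blast
  have setof_map: "setof (map (\<lambda>w. w \<in> S) ws) = S" if "S \<subseteq> W" for S
  proof
    show "setof (map (\<lambda>w. w \<in> S) ws) \<subseteq> S" unfolding setof_def by auto
    show "S \<subseteq> setof (map (\<lambda>w. w \<in> S) ws)"
    proof
      fix w assume "w \<in> S"
      then have "w \<in> set ws" using that setws by blast
      then obtain i where "i < length ws" "ws ! i = w" by (metis in_set_conv_nth)
      then show "w \<in> setof (map (\<lambda>w. w \<in> S) ws)" unfolding setof_def using \<open>w \<in> S\<close> by auto
    qed
  qed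
  define k where "k = card V - 1"
  define p where "p s \<alpha> = fst (tt (setof s)) * \<alpha>\<^sup>2 + fst (snd (tt (setof s))) * \<alpha>
      + snd (snd (tt (setof s))) + (\<Sum>i\<in>setof s. lam i)" for s \<alpha>
  have Pp: "P (setof s) (tt (setof s))" for s using Ptt[OF setof_sub] .
  have scq: "strongly_convex_quadratic (p s)" for s
    unfolding strongly_convex_quadratic_def p_def
    using Pp[of s] unfolding P_def by (intro exI[of _ "fst (tt (setof s))"] exI conjI) auto
  have finL: "finite {s :: bool list. length s = k}"
    using finite_lists_length_eq[of "UNIV :: bool set" k] by simp
  have neL: "{s :: bool list. length s = k} \<noteq> {}"
    by (metis (mono_tags) empty_iff length_replicate mem_Collect_eq)
  have main: "f_cost n Q c lam u \<alpha> = Min ((\<lambda>s. p s \<alpha>) ` {s. length s = k}) + lam u * ind \<alpha>" for \<alpha>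
  proof -
    define M where "M = Min ((\<lambda>s. p s \<alpha>) ` {s. length s = k})"
    have Mle: "M \<le> p s \<alpha>" if "length s = k" for s
      unfolding M_def using finL that by (intro Min_le) auto
    have "M \<in> (\<lambda>s. p s \<alpha>) ` {s. length s = k}"
      unfolding M_def using finL neL by (intro Min_in) auto
    then obtain s0 where s0: "length s0 = k" "p s0 \<alpha> = M" by auto
    define obj where "obj x z = (1/2) * (\<Sum>i\<in>V. \<Sum>j\<in>V. x i * Q i j * x j) + (\<Sum>i\<in>V. c i * x i)
             + (\<Sum>i\<in>V. lam i * z i)" for x z :: "nat \<Rightarrow> real"
    define feas where "feas x z \<longleftrightarrow> (\<forall>i\<in>V. z i \<in> {0, 1} \<and> x i * (1 - z i) = 0) \<and> x u = \<alpha>"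
      for x z :: "nat \<Rightarrow> real"
    have fc: "f_cost n Q c lam u \<alpha> = Inf {obj x z | x z. feas x z}"
      unfolding f_cost_def Let_def obj_def feas_def V_def by simp
    have objeq: "obj x z = QF Q V x / 2 + LF c V x + (\<Sum>i\<in>V. lam i * z i)" for x z
      unfolding obj_def QF_def LF_def by simp
    have lamV: "(\<Sum>i\<in>V. lam i * z i) = lam u * z u + (\<Sum>i\<in>W. lam i * z i)" for z :: "nat \<Rightarrow> real"
      unfolding VW using finW uW by simp
    have lb: "M + lam u * ind \<alpha> \<le> v" if vin: "v \<in> {obj x z | x z. feas x z}" for v
    proof -
      obtain x z where v: "v = obj x z" and f: "feas x z" using vin by blast
      define S where "S = {i \<in> W. z i = 1}"
      have SW: "S \<subseteq> W" unfolding S_def by auto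
      define s where "s = map (\<lambda>w. w \<in> S) ws"
      have ls: "length s = k" unfolding s_def k_def using lenws by simp
      have ss: "setof s = S" unfolding s_def using setof_map[OF SW] .
      have TV: "insert u S \<subseteq> V" using SW uV unfolding W_def by auto
      have x0: "\<forall>i\<in>V - insert u S. x i = 0"
      proof
        fix i assume i: "i \<in> V - insert u S"
        then have "z i \<noteq> 1" "i \<in> V" unfolding S_def W_def by auto
        then show "x i = 0" using f unfolding feas_def by force
      qed
      have q1: "QF Q V x = QF Q (insert u S) x" by (rule QF_restrict[OF finV TV x0])
      have q2: "LF c V x = LF c (insert u S) x" by (rule LF_restrict[OF finV TV x0])
      have "(\<Sum>i\<in>W. lam i * z i) = (\<Sum>i\<in>S. lam i)"
      proof (rule lam_sum[OF finW SW])
        show "\<forall>i\<in>S. z i = 1" unfolding S_def by auto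
        show "\<forall>i\<in>W - S. z i = 0" using f unfolding feas_def S_def W_def by auto
      qed
      then have lz: "(\<Sum>i\<in>V. lam i * z i) = lam u * z u + (\<Sum>i\<in>S. lam i)" using lamV by simp
      have zu: "ind \<alpha> \<le> z u"
      proof (cases "\<alpha> = 0")
        case True then show ?thesis using f uV unfolding feas_def ind_def by auto
      next
        case False
        then have "z u = 1" using f uV unfolding feas_def by force
        then show ?thesis unfolding ind_def by simp
      qed
      then have "lam u * ind \<alpha> \<le> lam u * z u" using lamu by simp
      moreover have "P S (tt S)" using Ptt[OF SW] .
      then have "fst (tt S) * (x u)\<^sup>2 + fst (snd (tt S)) * x u + snd (snd (tt S))
                  \<le> QF Q (insert u S) x / 2 + LF c (insert u S) x"
        unfolding P_def by simp
      moreover have "x u = \<alpha>" using f unfolding feas_def by simp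
      moreover have "M \<le> p s \<alpha>" using Mle[OF ls] .
      ultimately show ?thesis unfolding v objeq q1 q2 lz using ss unfolding p_def by simp
    qed
    have att: "M + lam u * ind \<alpha> \<in> {obj x z | x z. feas x z}"
    proof -
      define S where "S = setof s0"
      have SW: "S \<subseteq> W" unfolding S_def by (rule setof_sub)
      have TV: "insert u S \<subseteq> V" using SW uV unfolding W_def by auto
      have uS: "u \<notin> S" using SW uW by blast
      obtain x0 where x0: "x0 u = \<alpha>"
        "QF Q (insert u S) x0 / 2 + LF c (insert u S) x0 + 0 =
           fst (tt S) * \<alpha>\<^sup>2 + fst (snd (tt S)) * \<alpha> + snd (snd (tt S))"
        using Ptt[OF SW] unfolding P_def by blast
      define x where "x i = (if i \<in> insert u S then x0 i else 0)" for i
      define z where "z i = (if i \<in> S then 1 else if i = u \<and> \<alpha> \<noteq> 0 then 1 else (0::real))" for i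
      have xout: "\<forall>i\<in>V - insert u S. x i = 0" unfolding x_def by auto
      have xx0: "\<And>i. i \<in> insert u S \<Longrightarrow> x i = x0 i" unfolding x_def by auto
      have "feas x z" unfolding feas_def
      proof (intro conjI ballI)
        fix i assume "i \<in> V"
        show "z i \<in> {0, 1}" unfolding z_def by auto
        show "x i * (1 - z i) = 0"
          using x0(1) uS unfolding x_def z_def by auto
      next
        show "x u = \<alpha>" using x0(1) unfolding x_def by simp
      qed
      moreover have "obj x z = M + lam u * ind \<alpha>"
      proof -
        have q1: "QF Q V x = QF Q (insert u S) x0"
          using QF_restrict[OF finV TV xout] QF_cong[where T="insert u S" and x=x and y=x0 and A=Q, OF xx0] by simp
        have q2: "LF c V x = LF c (insert u S) x0"
          using LF_restrict[OF finV TV xout] LF_cong[where T="insert u S" and x=x and y=x0 and b=c, OF xx0] by simp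
        have "(\<Sum>i\<in>W. lam i * z i) = (\<Sum>i\<in>S. lam i)"
          by (rule lam_sum[OF finW SW]) (use uW in \<open>auto simp: z_def\<close>)
        moreover have "z u = ind \<alpha>" using uS unfolding z_def ind_def by auto
        ultimately have lz: "(\<Sum>i\<in>V. lam i * z i) = lam u * ind \<alpha> + (\<Sum>i\<in>S. lam i)"
          using lamV by simp
        show ?thesis unfolding objeq q1 q2 lz using x0(2) s0(2)
          unfolding p_def S_def by simp
      qed
      ultimately have "\<exists>x' z'. M + lam u * ind \<alpha> = obj x' z' \<and> feas x' z'" by metis
      then show ?thesis by (simp only: mem_Collect_eq)
    qed
    show ?thesis unfolding fc M_def[symmetric] by (rule cInf_eq_minimum[OF att lb])
  qed
  show ?thesis
    by (rule exI[of _ p]) (use scq main in \<open>auto simp: V_def k_def\<close>)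
qed



theorem lemma1:
  fixes n :: nat and Q :: "nat \<Rightarrow> nat \<Rightarrow> real" and c lam :: "nat \<Rightarrow> real"
  assumes n_pos: "n \<ge> 1"
    and sym: "\<forall>i\<in>{1..n}. \<forall>j\<in>{1..n}. Q i j = Q j i"
    and posdef: "\<forall>x :: nat \<Rightarrow> real. (\<exists>i\<in>{1..n}. x i \<noteq> 0) \<longrightarrow>
                   (\<Sum>i\<in>{1..n}. \<Sum>j\<in>{1..n}. x i * Q i j * x j) > 0"
    and diag: "\<forall>i\<in>{1..n}. Q i i = 1"
    and tree: "supp_is_tree n Q"
    and topo: "\<forall>u\<in>{1..<n}. u < child n Q u"
    and lam_pos: "\<forall>i\<in>{1..n}. lam i > 0"
    and u: "u \<in> {1..n}"
  shows "\<exists>p :: bool list \<Rightarrow> real \<Rightarrow> real.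
           (\<forall>s. length s = card (subtree n Q u) - 1 \<longrightarrow> strongly_convex_quadratic (p s)) \<and>
           (\<forall>\<alpha>. f_cost n Q c lam u \<alpha> =
                 Min ((\<lambda>s. p s \<alpha>) ` {s. length s = card (subtree n Q u) - 1}) + lam u * ind \<alpha>)"
  using assms by (rule lemma1_aux)

thm_deps lemma1

end
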